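(* Let $n_1>n_2>n_3\geq 2$ be integers. Let $X$ be the set of the following vectors of length $4$: $(j,j,j,0),(j,j,j,1)$ for $j\in\{1,\ldots,n_3\}$; $(n_3+k,n_3+k,1,0),(n_3+k,n_3+k,n_3,1)$ for $k\in\{0,\ldots,n_2-n_3-1\}$; $(n_2+k,1,1,0),(n_2+k,n_2,n_3,1)$ for $k\in\{0,\ldots,n_1-n_2-1\}$; and $(n_1,n_2,n_3,1)$. Let $\mathcal B$ consist of all $3$-element subsets $\{\alpha_1,\alpha_2,\alpha_3\}\subseteq X$ such that for each coordinate $j\in\{1,2,3,4\}$ the set $\{\alpha_{1(j)},\alpha_{2(j)},\alpha_{3(j)}\}$ has exactly $2$ elements, together with the additional triple $\{(1,1,1,0),(n_3,n_3,1,0),(n_3,n_3,n_3,0)\}$. Then the $3$-uniform bi-hypergraph $\mathcal H_{n_1,n_2,n_3}=(X,\mathcal B)$ is a one-realization of $\{n_1,n_2,n_3\}$.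
   Context: A bi-hypergraph $(X,\mathcal B)$ is a mixed hypergraph whose $\mathcal C$-edges and $\mathcal D$-edges both equal $\mathcal B$. A strict $k$-coloring is a partition of $X$ into exactly $k$ nonempty classes such that every edge of $\mathcal B$ contains two vertices of a common class and two vertices of distinct classes. The feasible set is the set of $k$ admitting a strict $k$-coloring; the chromatic spectrum lists, for $k=1,\ldots,\max$ of the feasible set, the number of strict $k$-colorings (as partitions). A one-realization of a set $S$ is a mixed hypergraph whose feasible set is $S$ and whose chromatic spectrum has all entries in $\{0,1\}$. $\alpha_{l(j)}$ denotes the $j$-th entry of $\alpha_l$. *)

theory Defs
  imports Main "HOL-Library.Disjoint_Sets"
begin

definition strict_coloring :: "'a set \<Rightarrow> 'a set set \<Rightarrow> 'a set set \<Rightarrow> 'a set set \<Rightarrow> bool" where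
  "strict_coloring X C D P \<longleftrightarrow>
     partition_on X P \<and>
     (\<forall>e\<in>C. \<exists>c\<in>P. \<exists>x\<in>e. \<exists>y\<in>e. x \<noteq> y \<and> x \<in> c \<and> y \<in> c) \<and>
     (\<forall>e\<in>D. \<exists>c\<in>P. \<exists>x\<in>e. \<exists>y\<in>e. x \<in> c \<and> y \<notin> c)"

definition feasible_set :: "'a set \<Rightarrow> 'a set set \<Rightarrow> 'a set set \<Rightarrow> nat set" where
  "feasible_set X C D = {k. \<exists>P. strict_coloring X C D P \<and> card P = k}"

definition spectrum_entry :: "'a set \<Rightarrow> 'a set set \<Rightarrow> 'a set set \<Rightarrow> nat \<Rightarrow> nat" where
  "spectrum_entry X C D k = card {P. strict_coloring X C D P \<and> card P = k}"

definition one_realization :: "nat set \<Rightarrow> 'a set \<Rightarrow> 'a set set \<Rightarrow> 'a set set \<Rightarrow> bool" where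
  "one_realization S X C D \<longleftrightarrow>
     feasible_set X C D = S \<and>
     (\<forall>k\<in>{1..Max (feasible_set X C D)}. spectrum_entry X C D k \<in> {0, 1})"

type_synonym vec4 = "nat \<times> nat \<times> nat \<times> nat"

fun coord :: "vec4 \<Rightarrow> nat \<Rightarrow> nat" where
  "coord (a, b, c, d) j = (if j = 1 then a else if j = 2 then b else if j = 3 then c else d)"

definition HX :: "nat \<Rightarrow> nat \<Rightarrow> nat \<Rightarrow> vec4 set" where
  "HX n1 n2 n3 =
     {(j, j, j, 0) | j. j \<in> {1..n3}} \<union> {(j, j, j, 1) | j. j \<in> {1..n3}} \<union>
     {(n3 + k, n3 + k, 1, 0) | k. k < n2 - n3} \<union> {(n3 + k, n3 + k, n3, 1) | k. k < n2 - n3} \<union>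
     {(n2 + k, 1, 1, 0) | k. k < n1 - n2} \<union> {(n2 + k, n2, n3, 1) | k. k < n1 - n2} \<union>
     {(n1, n2, n3, 1)}"

definition HB :: "nat \<Rightarrow> nat \<Rightarrow> nat \<Rightarrow> vec4 set set" where
  "HB n1 n2 n3 =
     {e. e \<subseteq> HX n1 n2 n3 \<and> card e = 3 \<and> (\<forall>j\<in>{1..4}. card ((\<lambda>a. coord a j) ` e) = 2)} \<union>
     {{(1, 1, 1, 0), (n3, n3, 1, 0), (n3, n3, n3, 0)}}"

end

theory Submission
  imports Defs
begin

lemma card3_two: "card {a,b,c::nat} = 2 \<longleftrightarrow> (a=b \<and> a\<noteq>c) \<or> (a=c \<and> a\<noteq>b) \<or> (b=c \<and> a\<noteq>b)"
  by (auto simp: card_insert_if)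

lemma edgeI:
  assumes "x \<in> HX n1 n2 n3" "y \<in> HX n1 n2 n3" "z \<in> HX n1 n2 n3" "x\<noteq>y" "x\<noteq>z" "y\<noteq>z"
   "card {coord x 1, coord y 1, coord z 1} = 2"
   "card {coord x 2, coord y 2, coord z 2} = 2"
   "card {coord x 3, coord y 3, coord z 3} = 2"
   "card {coord x 4, coord y 4, coord z 4} = 2"
  shows "{x,y,z} \<in> HB n1 n2 n3"
proof -
  have "{1..4::nat} = {1,2,3,4}" by auto
  then show ?thesis using assms unfolding HB_def by (auto simp: card_insert_if)
qed

definition r1 :: "nat \<Rightarrow> nat \<Rightarrow> nat \<Rightarrow> nat \<Rightarrow> vec4" where
  "r1 n1 n2 n3 v = (if v \<le> n3 then (v,v,v,0) else if v < n2 then (v,v,1,0) else if v < n1 then (v,1,1,0) else (n1,n2,n3,1))"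
definition r2 :: "nat \<Rightarrow> nat \<Rightarrow> nat \<Rightarrow> nat \<Rightarrow> vec4" where
  "r2 n1 n2 n3 v = (if v \<le> n3 then (v,v,v,0) else if v < n2 then (v,v,1,0) else (n1,n2,n3,1))"

definition Pm :: "vec4 set \<Rightarrow> nat \<Rightarrow> vec4 set set" where
  "Pm X m = (\<lambda>x. {y\<in>X. coord y m = coord x m}) ` X"

locale col =
  fixes n1 n2 n3 :: nat and P :: "vec4 set set"
  assumes n12: "n1 > n2" and n23: "n2 > n3" and n3: "n3 \<ge> 2"
  and sc: "strict_coloring (HX n1 n2 n3) (HB n1 n2 n3) (HB n1 n2 n3) P"
begin

abbreviation "X \<equiv> HX n1 n2 n3"
abbreviation "HBB \<equiv> HB n1 n2 n3"

definition R where "R x y \<longleftrightarrow> (\<exists>c\<in>P. x\<in>c \<and> y\<in>c)"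

lemma part: "partition_on X P" using sc unfolding strict_coloring_def by auto

lemma same_part: "c1 \<in> P \<Longrightarrow> c2 \<in> P \<Longrightarrow> y \<in> c1 \<Longrightarrow> y \<in> c2 \<Longrightarrow> c1 = c2"
  using partition_onD2[OF part] unfolding disjoint_def by blast

lemma R_sym: "R x y \<Longrightarrow> R y x" unfolding R_def by blast
lemma R_trans: "R x y \<Longrightarrow> R y z \<Longrightarrow> R x z" unfolding R_def using same_part by blast
lemma R_refl: "x \<in> X \<Longrightarrow> R x x" unfolding R_def using partition_onD1[OF part] by blast
lemma R_X: "R x y \<Longrightarrow> x \<in> X" unfolding R_def using partition_onD1[OF part] by blast

lemma edge_R:
  assumes e: "{x,y,z} \<in> HBB"
  shows "\<not>(R x y \<and> R x z)" "\<not>(R x y \<and> R y z)" "\<not>(R x z \<and> R y z)" "R x y \<or> R x z \<or> R y z"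
proof -
  have D: "\<exists>c\<in>P. \<exists>u\<in>{x,y,z}. \<exists>v\<in>{x,y,z}. u \<in> c \<and> v \<notin> c"
   and C: "\<exists>c\<in>P. \<exists>u\<in>{x,y,z}. \<exists>v\<in>{x,y,z}. u \<noteq> v \<and> u \<in> c \<and> v \<in> c"
    using sc e unfolding strict_coloring_def by blast+
  have all: False if "c0 \<in> P" "x \<in> c0" "y \<in> c0" "z \<in> c0" for c0
    using D same_part that by blast
  show "\<not>(R x y \<and> R x z)" using all same_part unfolding R_def by blast
  show "\<not>(R x y \<and> R y z)" using all same_part unfolding R_def by blast
  show "\<not>(R x z \<and> R y z)" using all same_part unfolding R_def by blast
  show "R x y \<or> R x z \<or> R y z" using C unfolding R_def by blast
qed


abbreviation aa :: "nat \<Rightarrow> vec4" where "aa j \<equiv> (j,j,j,0)"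
abbreviation bb :: "nat \<Rightarrow> vec4" where "bb j \<equiv> (j,j,j,1)"
abbreviation cc :: "nat \<Rightarrow> vec4" where "cc k \<equiv> (n3+k,n3+k,1,0)"
abbreviation dd :: "nat \<Rightarrow> vec4" where "dd k \<equiv> (n3+k,n3+k,n3,1)"
abbreviation ee :: "nat \<Rightarrow> vec4" where "ee k \<equiv> (n2+k,1,1,0)"
abbreviation ff :: "nat \<Rightarrow> vec4" where "ff k \<equiv> (n2+k,n2,n3,1)"
abbreviation gg :: "vec4" where "gg \<equiv> (n1,n2,n3,1)"

lemma memA: "1 \<le> j \<Longrightarrow> j \<le> n3 \<Longrightarrow> aa j \<in> X" by (auto simp: HX_def)
lemma memB: "1 \<le> j \<Longrightarrow> j \<le> n3 \<Longrightarrow> bb j \<in> X" by (auto simp: HX_def)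
lemma memC: "k < n2 - n3 \<Longrightarrow> cc k \<in> X" by (auto simp: HX_def)
lemma memD: "k < n2 - n3 \<Longrightarrow> dd k \<in> X" by (auto simp: HX_def)
lemma memE: "k < n1 - n2 \<Longrightarrow> ee k \<in> X" by (auto simp: HX_def)
lemma memF: "k < n1 - n2 \<Longrightarrow> ff k \<in> X" by (auto simp: HX_def)
lemma memG: "gg \<in> X" by (auto simp: HX_def)
lemma memC0: "(n3,n3,1,0) \<in> X" using memC[of 0] n23 by simp
lemma memA1: "(1,1,1,0) \<in> X" using memA[of 1] n3 by simp
lemma memB1: "(1,1,1,1) \<in> X" using memB[of 1] n3 by simp
lemma memAn: "aa n3 \<in> X" using memA[of n3] n3 by simp
lemma memBn: "bb n3 \<in> X" using memB[of n3] n3 by simp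

lemmas mems = memA memB memC memD memE memF memG memC0 memA1 memB1 memAn memBn

lemma X4: "x \<in> X \<Longrightarrow> coord x 4 = 0 \<or> coord x 4 = 1" by (auto simp: HX_def)

lemma extra: "{aa 1, (n3,n3,1,0), aa n3} \<in> HBB" unfolding HB_def by auto

lemma coreE: "1 \<le> i \<Longrightarrow> i \<le> n3 \<Longrightarrow> 1 \<le> j \<Longrightarrow> j \<le> n3 \<Longrightarrow> i \<noteq> j \<Longrightarrow>
   {aa i, bb i, aa j} \<in> HBB \<and> {aa i, bb i, bb j} \<in> HBB"
  by (intro conjI edgeI mems) (auto simp: card3_two)

lemma AB_transfer: assumes "1 \<le> i" "i \<le> n3" "1 \<le> j" "j \<le> n3" "i \<noteq> j" "R (aa j) (bb j)"
  shows "R (aa i) (bb i)"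
proof -
  from coreE[of j i] assms have e1: "{aa j, bb j, aa i} \<in> HBB" and e2: "{aa j, bb j, bb i} \<in> HBB" by auto
  from coreE[of i j] assms have e3: "{aa i, bb i, aa j} \<in> HBB" by auto
  show ?thesis using edge_R[OF e1] edge_R[OF e2] edge_R[OF e3] assms(6) R_sym by blast
qed

lemma AB1: "R (aa 1) (bb 1)"
proof (rule ccontr)
  assume h1: "\<not> R (aa 1) (bb 1)"
  have hn: "\<not> R (aa n3) (bb n3)" using AB_transfer[of 1 n3] n3 h1 by auto
  have e1: "{aa 1, bb 1, aa n3} \<in> HBB" "{aa 1, bb 1, bb n3} \<in> HBB"
   "{aa n3, bb n3, aa 1} \<in> HBB" "{aa n3, bb n3, bb 1} \<in> HBB"
    using coreE[of 1 n3] coreE[of n3 1] n3 by auto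
  have e2: "{(n3,n3,1,0), aa n3, bb 1} \<in> HBB" "{(n3,n3,1,0), bb n3, aa 1} \<in> HBB"
      "{(n3,n3,1,0), bb n3, bb 1} \<in> HBB"
    using n3 by (intro edgeI mems; auto simp: card3_two)+
  note E = edge_R[OF e1(1)] edge_R[OF e1(2)] edge_R[OF e1(3)] edge_R[OF e1(4)]
     edge_R[OF e2(1)] edge_R[OF e2(2)] edge_R[OF e2(3)] edge_R[OF extra]
  have "R (aa 1) (aa n3) \<or> R (bb 1) (aa n3)" using E(4) h1 by blast
  then show False
  proof
    assume a: "R (aa 1) (aa n3)"
    have b: "R (bb 1) (bb n3)" using E(8) h1 hn a R_trans R_sym by blast
    have "\<not> R (bb 1) (aa n3)" using a h1 R_trans R_sym by blast
    then show False using E(17-32) a b R_trans R_sym by blast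
  next
    assume a: "R (bb 1) (aa n3)"
    have b: "R (aa 1) (bb n3)" using E(8) h1 hn a R_trans R_sym by blast
    have "\<not> R (aa 1) (aa n3)" using a h1 R_trans R_sym by blast
    then show False using E(17-32) a b R_trans R_sym by blast
  qed
qed

lemma AB: "1 \<le> j \<Longrightarrow> j \<le> n3 \<Longrightarrow> R (aa j) (bb j)"
  using AB_transfer[of j 1] AB1 n3 by (cases "j = 1") auto

lemma AA: "1 \<le> i \<Longrightarrow> i \<le> n3 \<Longrightarrow> 1 \<le> j \<Longrightarrow> j \<le> n3 \<Longrightarrow> i \<noteq> j \<Longrightarrow> \<not> R (aa i) (aa j)"
  using coreE[of i j] edge_R AB by blast

lemma avoid: assumes "x \<in> X" "1 \<le> j" "j \<le> n3" "coord x 1 \<noteq> j" "coord x 2 \<noteq> j" "coord x 3 \<noteq> j"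
  shows "\<not> R (aa j) x"
proof -
  obtain p q r s where x: "x = (p,q,r,s)" by (cases x) auto
  have "{aa j, bb j, x} \<in> HBB"
    using assms X4[OF assms(1)] unfolding x by (intro edgeI mems) (auto simp: card3_two)
  then show ?thesis using edge_R AB assms by blast
qed


lemmas nn = n12 n23 n3

lemma An_Bn: "R (aa n3) (bb n3)" using AB[of n3] nn by auto
lemma not_A1_An: "\<not> R (aa 1) (aa n3)" using AA[of 1 n3] nn by auto
lemma not_A1_Bn: "\<not> R (aa 1) (bb n3)" using An_Bn not_A1_An R_trans R_sym by blast

lemma C0_cases: "R (aa 1) (n3,n3,1,0) \<or> R (aa n3) (n3,n3,1,0)"
proof -
  have e: "{aa 1, bb n3, (n3,n3,1,0)} \<in> HBB" using nn by (intro edgeI mems) (auto simp: card3_two)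
  then show ?thesis using edge_R[OF e] not_A1_Bn An_Bn R_trans R_sym by blast
qed

lemma notCn_C: "1 \<le> k \<Longrightarrow> k < n2 - n3 \<Longrightarrow> \<not> R (aa n3) (cc k)"
  using nn by (intro avoid mems) auto
lemma notC1_D: "k < n2 - n3 \<Longrightarrow> \<not> R (aa 1) (dd k)"
  using nn by (intro avoid mems) auto
lemma notCn_E: "k < n1 - n2 \<Longrightarrow> \<not> R (aa n3) (ee k)"
  using nn by (intro avoid mems) auto
lemma notC1_F: "k < n1 - n2 \<Longrightarrow> \<not> R (aa 1) (ff k)"
  using nn by (intro avoid mems) auto
lemma notC1_G: "\<not> R (aa 1) gg"
  using nn by (intro avoid mems) auto


lemma eCCD: "k < n2 - n3 \<Longrightarrow> l < n2 - n3 \<Longrightarrow> k \<noteq> l \<Longrightarrow> {cc k, cc l, dd k} \<in> HBB"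
  using nn by (intro edgeI mems) (auto simp: card3_two)
lemma eCDA1: "1 \<le> k \<Longrightarrow> k < n2 - n3 \<Longrightarrow> {cc k, dd k, aa 1} \<in> HBB"
  using nn by (intro edgeI mems) (auto simp: card3_two)
lemma eCDAn: "1 \<le> k \<Longrightarrow> k < n2 - n3 \<Longrightarrow> {cc k, dd k, aa n3} \<in> HBB"
  using nn by (intro edgeI mems) (auto simp: card3_two)
lemma eC0DAn: "1 \<le> k \<Longrightarrow> k < n2 - n3 \<Longrightarrow> {(n3,n3,1,0), dd k, aa n3} \<in> HBB"
  using nn by (intro edgeI mems) (auto simp: card3_two)
lemma eEC0B: "k < n1 - n2 \<Longrightarrow> {ee k, (n3,n3,1,0), bb n3} \<in> HBB"
  using nn by (intro edgeI mems) (auto simp: card3_two)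
lemma eFC0B: "k < n1 - n2 \<Longrightarrow> {ff k, (n3,n3,1,0), bb n3} \<in> HBB"
  using nn by (intro edgeI mems) (auto simp: card3_two)
lemma eGC0B: "{gg, (n3,n3,1,0), bb n3} \<in> HBB"
  using nn by (intro edgeI mems) (auto simp: card3_two)
lemma eFAnC0: "k < n1 - n2 \<Longrightarrow> {ff k, aa n3, (n3,n3,1,0)} \<in> HBB"
  using nn by (intro edgeI mems) (auto simp: card3_two)
lemma eGAnC0: "{gg, aa n3, (n3,n3,1,0)} \<in> HBB"
  using nn by (intro edgeI mems) (auto simp: card3_two)
lemma eECD: "k < n1 - n2 \<Longrightarrow> l < n2 - n3 \<Longrightarrow> {ee k, cc l, dd l} \<in> HBB"
  using nn by (intro edgeI mems) (auto simp: card3_two)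
lemma eFCD: "k < n1 - n2 \<Longrightarrow> l < n2 - n3 \<Longrightarrow> {ff k, cc l, dd l} \<in> HBB"
  using nn by (intro edgeI mems) (auto simp: card3_two)
lemma eGCD: "l < n2 - n3 \<Longrightarrow> {gg, cc l, dd l} \<in> HBB"
  using nn by (intro edgeI mems) (auto simp: card3_two)
lemma eEFA1: "k < n1 - n2 \<Longrightarrow> {ee k, ff k, aa 1} \<in> HBB"
  using nn by (intro edgeI mems) (auto simp: card3_two)
lemma eEFG: "k < n1 - n2 \<Longrightarrow> {ee k, ff k, gg} \<in> HBB"
  using nn by (intro edgeI mems) (auto simp: card3_two)
lemma eEFE: "k < n1 - n2 \<Longrightarrow> l < n1 - n2 \<Longrightarrow> k \<noteq> l \<Longrightarrow> {ee k, ff k, ee l} \<in> HBB"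
  using nn by (intro edgeI mems) (auto simp: card3_two)
lemma eEFF: "k < n1 - n2 \<Longrightarrow> l < n1 - n2 \<Longrightarrow> k \<noteq> l \<Longrightarrow> {ee k, ff k, ff l} \<in> HBB"
  using nn by (intro edgeI mems) (auto simp: card3_two)


abbreviation "c0 \<equiv> (n3,n3,1,0) :: vec4"

lemma nt1: "R x y \<Longrightarrow> \<not> R x z \<Longrightarrow> \<not> R y z" using R_trans R_sym by metis
lemma nt2: "R y z \<Longrightarrow> \<not> R x z \<Longrightarrow> \<not> R x y" using R_trans by metis
lemma nsym: "\<not> R x y \<Longrightarrow> \<not> R y x" using R_sym by metis

lemma splitC: "R (aa 1) c0 \<Longrightarrow> k < n2 - n3 \<Longrightarrow> R (aa 1) (cc k)"
proof (cases "k = 0")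
  case False
  assume a: "R (aa 1) c0" "k < n2 - n3"
  have k1: "1 \<le> k" using False by simp
  have e: "{c0, cc k, bb n3} \<in> HBB" using eCCD[of 0 k] a False by simp
  have 1: "\<not> R c0 (bb n3)" using nt1[OF a(1) not_A1_Bn] .
  have 2: "\<not> R (cc k) (bb n3)" using nsym[OF nt1[OF An_Bn notCn_C[OF k1 a(2)]]] .
  have "R c0 (cc k)" using edge_R(4)[OF e] 1 2 by blast
  then show ?thesis using R_trans[OF a(1)] by blast
qed simp

lemma splitD: "R (aa 1) c0 \<Longrightarrow> k < n2 - n3 \<Longrightarrow> R (aa n3) (dd k)"
proof (cases "k = 0")
  case True then show ?thesis using An_Bn by simp
next
  case False
  assume a: "R (aa 1) c0" "k < n2 - n3"
  have C: "R (aa 1) (cc k)" using splitC a by blast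
  have k1: "1 \<le> k" using False by simp
  have 1: "\<not> R (cc k) (dd k)" using nt1[OF C notC1_D[OF a(2)]] .
  have 2: "\<not> R (cc k) (aa n3)" using nsym[OF notCn_C[OF k1 a(2)]] .
  have "R (dd k) (aa n3)" using edge_R(4)[OF eCDAn[OF k1 a(2)]] 1 2 by blast
  then show ?thesis using R_sym by blast
qed

lemma splitE: assumes a: "R (aa 1) c0" and k: "k < n1 - n2" shows "R (aa 1) (ee k)"
proof -
  have 1: "\<not> R c0 (bb n3)" using nt1[OF a(1) not_A1_Bn] .
  have 2: "\<not> R (ee k) (bb n3)" using nsym[OF nt1[OF An_Bn notCn_E[OF k]]] .
  have "R (ee k) c0" using edge_R(4)[OF eEC0B[OF k]] 1 2 by blast
  then show ?thesis using R_trans[OF a R_sym] by blast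
qed
lemma splitF: assumes a: "R (aa 1) c0" and k: "k < n1 - n2" shows "R (aa n3) (ff k)"
proof -
  have 1: "\<not> R c0 (bb n3)" using nt1[OF a(1) not_A1_Bn] .
  have 2: "\<not> R (ff k) c0" using nsym[OF nt1[OF a notC1_F[OF k]]] .
  have "R (ff k) (bb n3)" using edge_R(4)[OF eFC0B[OF k]] 1 2 by blast
  then show ?thesis using R_trans[OF An_Bn R_sym] by blast
qed
lemma splitG: assumes a: "R (aa 1) c0" shows "R (aa n3) gg"
proof -
  have 1: "\<not> R c0 (bb n3)" using nt1[OF a(1) not_A1_Bn] .
  have 2: "\<not> R gg c0" using nsym[OF nt1[OF a notC1_G]] .
  have "R gg (bb n3)" using edge_R(4)[OF eGC0B] 1 2 by blast
  then show ?thesis using R_trans[OF An_Bn R_sym] by blast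
qed

lemma sameCD: "R (aa n3) c0 \<Longrightarrow> k < n2 - n3 \<Longrightarrow> R (cc k) (dd k)"
proof (cases "k = 0")
  case True
  assume a: "R (aa n3) c0"
  have "R c0 (bb n3)" using R_trans[OF R_sym[OF a] An_Bn] .
  then show ?thesis using True by simp
next
  case False
  assume a: "R (aa n3) c0" "k < n2 - n3"
  have k1: "1 \<le> k" using False by simp
  show ?thesis
  proof (rule ccontr)
    assume n: "\<not> R (cc k) (dd k)"
    have 2: "\<not> R (cc k) (aa n3)" using nsym[OF notCn_C[OF k1 a(2)]] .
    have 3: "R (dd k) (aa n3)" using edge_R(4)[OF eCDAn[OF k1 a(2)]] n 2 by blast
    have 4: "R c0 (aa n3)" using R_sym[OF a(1)] .
    have 5: "R c0 (dd k)" using R_trans[OF 4 R_sym[OF 3]] .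
    show False using edge_R(1)[OF eC0DAn[OF k1 a(2)]] 4 5 by blast
  qed
qed

lemma same_notC1: "R (aa n3) c0 \<Longrightarrow> k < n2 - n3 \<Longrightarrow> \<not> R (aa 1) (cc k)"
proof (cases "k = 0")
  case True
  assume a: "R (aa n3) c0"
  have "\<not> R (aa 1) c0" using nt2[OF R_sym[OF a] not_A1_An] .
  then show ?thesis using True by simp
next
  case False
  assume a: "R (aa n3) c0" "k < n2 - n3"
  have k1: "1 \<le> k" using False by simp
  have "R (cc k) (dd k)" using sameCD[OF a] .
  then show ?thesis using edge_R(1)[OF eCDA1[OF k1 a(2)]] R_sym by blast
qed

lemma same_CC: "R (aa n3) c0 \<Longrightarrow> k < n2 - n3 \<Longrightarrow> l < n2 - n3 \<Longrightarrow> k \<noteq> l \<Longrightarrow> \<not> R (cc k) (cc l)"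
  using edge_R(1)[OF eCCD[of k l]] sameCD[of k] by blast
lemma same_nF: "R (aa n3) c0 \<Longrightarrow> k < n1 - n2 \<Longrightarrow> \<not> R (aa n3) (ff k)"
  using edge_R(2)[OF eFAnC0[of k]] R_sym[of "aa n3" "ff k"] by blast
lemma same_nG: "R (aa n3) c0 \<Longrightarrow> \<not> R (aa n3) gg"
  using edge_R(2)[OF eGAnC0] R_sym[of "aa n3" gg] by blast
lemma same_EC: "R (aa n3) c0 \<Longrightarrow> k < n1 - n2 \<Longrightarrow> l < n2 - n3 \<Longrightarrow> \<not> R (ee k) (cc l)"
  using edge_R(2)[OF eECD[of k l]] sameCD[of l] by blast
lemma same_GC: "R (aa n3) c0 \<Longrightarrow> l < n2 - n3 \<Longrightarrow> \<not> R gg (cc l)"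
  using edge_R(2)[OF eGCD[of l]] sameCD[of l] by blast

lemma EF_or: "k < n1 - n2 \<Longrightarrow> R (ee k) (ff k) \<or> R (aa 1) (ee k)"
  using edge_R(4)[OF eEFA1[of k]] nsym[OF notC1_F[of k]] R_sym[of "ee k" "aa 1"] by blast
lemma EF_G: assumes k: "k < n1 - n2" and n: "\<not> R (ee k) (ff k)" shows "R (ff k) gg"
proof -
  have 1: "R (aa 1) (ee k)" using EF_or[OF k] n by blast
  have 2: "\<not> R (ee k) gg" using nt1[OF 1 notC1_G] .
  show ?thesis using edge_R(4)[OF eEFG[OF k]] n 2 by blast
qed
lemma EF_transfer: assumes "k < n1 - n2" "l < n1 - n2" "k \<noteq> l" "R (ee l) (ff l)" shows "R (ee k) (ff k)"
proof -
  have 1: "\<not> R (ee l) (ee k)" using edge_R(1)[OF eEFE[of l k]] assms by blast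
  have 2: "\<not> R (ee l) (ff k)" using edge_R(1)[OF eEFF[of l k]] assms by blast
  show ?thesis using edge_R(4)[OF eEFE[of k l]] assms nsym[OF 1] nsym[OF 2] by blast
qed
lemma EF_A1: "k < n1 - n2 \<Longrightarrow> R (ee k) (ff k) \<Longrightarrow> \<not> R (aa 1) (ee k)"
  using edge_R(1)[OF eEFA1[of k]] R_sym[of "aa 1" "ee k"] by blast
lemma EF_E: "k < n1 - n2 \<Longrightarrow> l < n1 - n2 \<Longrightarrow> k \<noteq> l \<Longrightarrow> R (ee k) (ff k) \<Longrightarrow> \<not> R (ee k) (ee l)"
  using edge_R[OF eEFE[of k l]] by blast
lemma EF_nG: "k < n1 - n2 \<Longrightarrow> R (ee k) (ff k) \<Longrightarrow> \<not> R (ee k) gg"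
  using edge_R[OF eEFG[of k]] by blast

lemma X_cases:
  assumes "x \<in> X"
  obtains (A) j where "1\<le>j" "j\<le>n3" "x = aa j" | (B) j where "1\<le>j" "j\<le>n3" "x = bb j"
   | (C) k where "k < n2 - n3" "x = cc k" | (D) k where "k < n2 - n3" "x = dd k"
   | (E) k where "k < n1 - n2" "x = ee k" | (F) k where "k < n1 - n2" "x = ff k"
   | (G) "x = gg"
  using assms unfolding HX_def by auto

lemma rng1: "x \<in> X \<Longrightarrow> coord x 1 \<in> {1..n1}" using nn by (auto simp: HX_def)
lemma rng2: "x \<in> X \<Longrightarrow> coord x 2 \<in> {1..n2}" using nn by (auto simp: HX_def)
lemma rng3: "x \<in> X \<Longrightarrow> coord x 3 \<in> {1..n3}" using nn by (auto simp: HX_def)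

lemma rep_char:
  assumes A: "\<forall>x\<in>X. R x (r (coord x m))" and B: "\<forall>x\<in>X. coord x m \<in> V"
    and C: "\<forall>v\<in>V. \<forall>w\<in>V. v < w \<longrightarrow> \<not> R (r v) (r w)"
  shows "\<forall>x\<in>X. \<forall>y\<in>X. R x y \<longleftrightarrow> coord x m = coord y m"
proof (intro ballI iffI)
  fix x y assume x: "x \<in> X" and y: "y \<in> X"
  have ax: "R x (r (coord x m))" and ay: "R y (r (coord y m))" using A x y by auto
  have vx: "coord x m \<in> V" and vy: "coord y m \<in> V" using B x y by auto
  { assume h: "R x y"
    have r: "R (r (coord x m)) (r (coord y m))" using R_trans[OF R_trans[OF R_sym[OF ax] h] ay] .
    show "coord x m = coord y m"
    proof (rule ccontr)
      assume "coord x m \<noteq> coord y m"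
      then consider "coord x m < coord y m" | "coord y m < coord x m" by linarith
      then show False
      proof cases
        case 1 then show False using C vx vy r by blast
      next
        case 2 then show False using C vx vy R_sym[OF r] by blast
      qed
    qed }
  { assume "coord x m = coord y m"
    then have "R x (r (coord y m))" using ax by simp
    then show "R x y" using R_trans[OF _ R_sym[OF ay]] by blast }
qed

lemma class3: assumes sp: "R (aa 1) c0" shows "\<forall>x\<in>X. \<forall>y\<in>X. R x y \<longleftrightarrow> coord x 3 = coord y 3"
proof (rule rep_char[where r=aa and V="{1..n3}"])
  show "\<forall>x\<in>X. coord x 3 \<in> {1..n3}" using rng3 by blast
  show "\<forall>v\<in>{1..n3}. \<forall>w\<in>{1..n3}. v < w \<longrightarrow> \<not> R (aa v) (aa w)" using AA by auto
  show "\<forall>x\<in>X. R x (aa (coord x 3))"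
  proof
    fix x assume x: "x \<in> X"
    then show "R x (aa (coord x 3))"
    proof (cases rule: X_cases)
      case (A j) then show ?thesis using R_refl[OF memA[of j]] by simp
    next
      case (B j) then show ?thesis using R_sym[OF AB[of j]] by simp
    next
      case (C k) then show ?thesis using R_sym[OF splitC[OF sp C(1)]] by simp
    next
      case (D k) then show ?thesis using R_sym[OF splitD[OF sp D(1)]] by simp
    next
      case (E k) then show ?thesis using R_sym[OF splitE[OF sp E(1)]] by simp
    next
      case (F k) then show ?thesis using R_sym[OF splitF[OF sp F(1)]] by simp
    next
      case G then show ?thesis using R_sym[OF splitG[OF sp]] by simp
    qed
  qed
qed

lemma CD_rep: assumes sm: "R (aa n3) c0" and k: "k < n2 - n3"
  shows "R (cc k) (if n3 + k \<le> n3 then aa (n3+k) else cc (n3 + k - n3))"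
    and "R (dd k) (if n3 + k \<le> n3 then aa (n3+k) else cc (n3 + k - n3))"
proof -
  show "R (cc k) (if n3 + k \<le> n3 then aa (n3+k) else cc (n3 + k - n3))"
  proof (cases "k = 0")
    case True then show ?thesis using R_sym[OF sm] by simp
  next
    case False then show ?thesis using R_refl[OF memC[OF k]] by simp
  qed
  show "R (dd k) (if n3 + k \<le> n3 then aa (n3+k) else cc (n3 + k - n3))"
  proof (cases "k = 0")
    case True then show ?thesis using R_sym[OF An_Bn] by simp
  next
    case False then show ?thesis using R_sym[OF sameCD[OF sm k]] by simp
  qed
qed

lemma A_C: assumes sm: "R (aa n3) c0" and v: "1 \<le> v" "v \<le> n3" and k: "1 \<le> k" "k < n2 - n3"
  shows "\<not> R (aa v) (cc k)"
proof (cases "v = 1")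
  case True then show ?thesis using same_notC1[OF sm k(2)] by simp
next
  case False then show ?thesis using avoid[OF memC[OF k(2)] v] v k by auto
qed

lemma A_G: assumes sm: "R (aa n3) c0" and v: "1 \<le> v" "v \<le> n3"
  shows "\<not> R (aa v) gg"
proof (cases "v = n3")
  case True then show ?thesis using same_nG[OF sm] by simp
next
  case False then show ?thesis using avoid[OF memG v] v nn by auto
qed

lemma EFall: assumes "R (ee 0) (ff 0)" "k < n1 - n2" shows "R (ee k) (ff k)"
proof (cases "k = 0")
  case True then show ?thesis using assms by simp
next
  case False then show ?thesis using EF_transfer[of k 0] assms nn by auto
qed

lemma EFnone: assumes "\<not> R (ee 0) (ff 0)" "k < n1 - n2" shows "\<not> R (ee k) (ff k)"
  using EF_transfer[of 0 k] assms nn by (cases "k = 0") auto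

lemma A_E: assumes ef: "R (ee 0) (ff 0)" and v: "1 \<le> v" "v \<le> n3" and k: "k < n1 - n2"
  shows "\<not> R (aa v) (ee k)"
proof (cases "v = 1")
  case True then show ?thesis using EF_A1[OF k EFall[OF ef k]] by simp
next
  case False then show ?thesis using avoid[OF memE[OF k] v] v k nn by auto
qed

lemma cc_eq: "n3 < w \<Longrightarrow> cc (w - n3) = (w,w,1,0)" by simp
lemma ee_eq: "n2 \<le> w \<Longrightarrow> ee (w - n2) = (w,1,1,0)" by simp

lemma class1_pair: assumes sm: "R (aa n3) c0" and ef: "R (ee 0) (ff 0)"
  and v: "v \<in> {1..n1}" and w: "w \<in> {1..n1}" and vw: "v < w"
  shows "\<not> R (r1 n1 n2 n3 v) (r1 n1 n2 n3 w)"
proof -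
  consider (a) "v \<le> n3" | (b) "n3 < v" "v < n2" | (c) "n2 \<le> v" "v < n1" using v vw w by force
  then show ?thesis
  proof cases
    case a
    consider (a) "w \<le> n3" | (b) "n3 < w" "w < n2" | (c) "n2 \<le> w" "w < n1" | (d) "w = n1" using w by force
    then show ?thesis
    proof cases
      case a then show ?thesis using AA[of v w] v w vw \<open>v \<le> n3\<close> by (simp add: r1_def)
    next
      case b
      have "\<not> R (aa v) (cc (w - n3))" using A_C[OF sm, of v "w - n3"] v b \<open>v \<le> n3\<close> by auto
      then show ?thesis using b \<open>v \<le> n3\<close> by (simp add: r1_def)
    next
      case c
      have "\<not> R (aa v) (ee (w - n2))" using A_E[OF ef, of v "w - n2"] v c \<open>v \<le> n3\<close> by auto
      then show ?thesis using c \<open>v \<le> n3\<close> nn by (simp add: r1_def)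
    next
      case d
      have "\<not> R (aa v) gg" using A_G[OF sm, of v] v \<open>v \<le> n3\<close> by auto
      then show ?thesis using d \<open>v \<le> n3\<close> nn by (simp add: r1_def)
    qed
  next
    case b
    consider (b) "n3 < w" "w < n2" | (c) "n2 \<le> w" "w < n1" | (d) "w = n1" using w vw \<open>n3 < v\<close> by force
    then show ?thesis
    proof cases
      case b
      have "\<not> R (cc (v - n3)) (cc (w - n3))" using same_CC[OF sm, of "v - n3" "w - n3"] b \<open>n3 < v\<close> \<open>v < n2\<close> vw by auto
      then show ?thesis using b \<open>n3 < v\<close> \<open>v < n2\<close> by (simp add: r1_def)
    next
      case c
      have "\<not> R (cc (v - n3)) (ee (w - n2))" using nsym[OF same_EC[OF sm, of "w - n2" "v - n3"]] c \<open>n3 < v\<close> \<open>v < n2\<close> by auto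
      then show ?thesis using c \<open>n3 < v\<close> \<open>v < n2\<close> nn by (simp add: r1_def)
    next
      case d
      have "\<not> R (cc (v - n3)) gg" using nsym[OF same_GC[OF sm, of "v - n3"]] \<open>n3 < v\<close> \<open>v < n2\<close> by auto
      then show ?thesis using d \<open>n3 < v\<close> \<open>v < n2\<close> nn by (simp add: r1_def)
    qed
  next
    case c
    consider (c) "n2 \<le> w" "w < n1" | (d) "w = n1" using w vw \<open>n2 \<le> v\<close> by force
    then show ?thesis
    proof cases
      case c
      have "\<not> R (ee (v - n2)) (ee (w - n2))" using EF_E[of "v - n2" "w - n2"] EFall[OF ef, of "v - n2"] c \<open>n2 \<le> v\<close> \<open>v < n1\<close> vw by auto
      then show ?thesis using c \<open>n2 \<le> v\<close> \<open>v < n1\<close> nn by (simp add: r1_def)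
    next
      case d
      have "\<not> R (ee (v - n2)) gg" using EF_nG[of "v - n2"] EFall[OF ef, of "v - n2"] \<open>n2 \<le> v\<close> \<open>v < n1\<close> by auto
      then show ?thesis using d \<open>n2 \<le> v\<close> \<open>v < n1\<close> nn by (simp add: r1_def)
    qed
  qed
qed

lemma class1: assumes sm: "R (aa n3) c0" and ef: "R (ee 0) (ff 0)"
  shows "\<forall>x\<in>X. \<forall>y\<in>X. R x y \<longleftrightarrow> coord x 1 = coord y 1"
proof (rule rep_char[where r="r1 n1 n2 n3" and V="{1..n1}"])
  show "\<forall>x\<in>X. coord x 1 \<in> {1..n1}" using rng1 by blast
  show "\<forall>v\<in>{1..n1}. \<forall>w\<in>{1..n1}. v < w \<longrightarrow> \<not> R (r1 n1 n2 n3 v) (r1 n1 n2 n3 w)"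
    using class1_pair[OF sm ef] by blast
  show "\<forall>x\<in>X. R x (r1 n1 n2 n3 (coord x 1))"
  proof
    fix x assume x: "x \<in> X"
    then show "R x (r1 n1 n2 n3 (coord x 1))"
    proof (cases rule: X_cases)
      case (A j) then show ?thesis using R_refl[OF memA[of j]] by (simp add: r1_def)
    next
      case (B j) then show ?thesis using R_sym[OF AB[of j]] by (simp add: r1_def)
    next
      case (C k) then show ?thesis using CD_rep(1)[OF sm C(1)] by (auto simp add: r1_def)
    next
      case (D k) then show ?thesis using CD_rep(2)[OF sm D(1)] by (auto simp add: r1_def)
    next
      case (E k) then show ?thesis using R_refl[OF memE[OF E(1)]] nn by (auto simp add: r1_def)
    next
      case (F k) then show ?thesis using R_sym[OF EFall[OF ef F(1)]] nn by (auto simp add: r1_def)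
    next
      case G then show ?thesis using R_refl[OF memG] nn by (auto simp add: r1_def)
    qed
  qed
qed

lemma class2_pair: assumes sm: "R (aa n3) c0"
  and v: "v \<in> {1..n2}" and w: "w \<in> {1..n2}" and vw: "v < w"
  shows "\<not> R (r2 n1 n2 n3 v) (r2 n1 n2 n3 w)"
proof -
  consider (a) "v \<le> n3" | (b) "n3 < v" "v < n2" using v vw w by force
  then show ?thesis
  proof cases
    case a
    consider (a) "w \<le> n3" | (b) "n3 < w" "w < n2" | (d) "w = n2" using w by force
    then show ?thesis
    proof cases
      case a then show ?thesis using AA[of v w] v w vw \<open>v \<le> n3\<close> by (simp add: r2_def)
    next
      case b
      have "\<not> R (aa v) (cc (w - n3))" using A_C[OF sm, of v "w - n3"] v b \<open>v \<le> n3\<close> by auto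
      then show ?thesis using b \<open>v \<le> n3\<close> by (simp add: r2_def)
    next
      case d
      have "\<not> R (aa v) gg" using A_G[OF sm, of v] v \<open>v \<le> n3\<close> by auto
      then show ?thesis using d \<open>v \<le> n3\<close> nn by (simp add: r2_def)
    qed
  next
    case b
    consider (b) "n3 < w" "w < n2" | (d) "w = n2" using w vw \<open>n3 < v\<close> by force
    then show ?thesis
    proof cases
      case b
      have "\<not> R (cc (v - n3)) (cc (w - n3))" using same_CC[OF sm, of "v - n3" "w - n3"] b \<open>n3 < v\<close> \<open>v < n2\<close> vw by auto
      then show ?thesis using b \<open>n3 < v\<close> \<open>v < n2\<close> by (simp add: r2_def)
    next
      case d
      have "\<not> R (cc (v - n3)) gg" using nsym[OF same_GC[OF sm, of "v - n3"]] \<open>n3 < v\<close> \<open>v < n2\<close> by auto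
      then show ?thesis using d \<open>n3 < v\<close> \<open>v < n2\<close> nn by (simp add: r2_def)
    qed
  qed
qed

lemma class2: assumes sm: "R (aa n3) c0" and ef: "\<not> R (ee 0) (ff 0)"
  shows "\<forall>x\<in>X. \<forall>y\<in>X. R x y \<longleftrightarrow> coord x 2 = coord y 2"
proof (rule rep_char[where r="r2 n1 n2 n3" and V="{1..n2}"])
  show "\<forall>x\<in>X. coord x 2 \<in> {1..n2}" using rng2 by blast
  show "\<forall>v\<in>{1..n2}. \<forall>w\<in>{1..n2}. v < w \<longrightarrow> \<not> R (r2 n1 n2 n3 v) (r2 n1 n2 n3 w)"
    using class2_pair[OF sm] by blast
  show "\<forall>x\<in>X. R x (r2 n1 n2 n3 (coord x 2))"
  proof
    fix x assume x: "x \<in> X"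
    then show "R x (r2 n1 n2 n3 (coord x 2))"
    proof (cases rule: X_cases)
      case (A j) then show ?thesis using R_refl[OF memA[of j]] by (simp add: r2_def)
    next
      case (B j) then show ?thesis using R_sym[OF AB[of j]] by (simp add: r2_def)
    next
      case (C k) then show ?thesis using CD_rep(1)[OF sm C(1)] by (auto simp add: r2_def)
    next
      case (D k) then show ?thesis using CD_rep(2)[OF sm D(1)] by (auto simp add: r2_def)
    next
      case (E k)
      have "R (aa 1) (ee k)" using EF_or[OF E(1)] EFnone[OF ef E(1)] by blast
      then show ?thesis using E R_sym nn by (auto simp add: r2_def)
    next
      case (F k) then show ?thesis using EF_G[OF F(1) EFnone[OF ef F(1)]] nn by (auto simp add: r2_def)
    next
      case G then show ?thesis using R_refl[OF memG] nn by (auto simp add: r2_def)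
    qed
  qed
qed

lemma classify: "\<exists>m\<in>{1,2,3}. \<forall>x\<in>X. \<forall>y\<in>X. R x y \<longleftrightarrow> coord x m = coord y m"
proof (cases "R (aa 1) c0")
  case True then show ?thesis using class3 by blast
next
  case False
  then have sm: "R (aa n3) c0" using C0_cases by blast
  show ?thesis
  proof (cases "R (ee 0) (ff 0)")
    case True then show ?thesis using class1[OF sm] by blast
  next
    case False then show ?thesis using class2[OF sm] by blast
  qed
qed

lemma P_eq: assumes h: "\<forall>x\<in>X. \<forall>y\<in>X. R x y \<longleftrightarrow> coord x m = coord y m"
  shows "P = Pm X m"
proof -
  have U: "\<Union>P = X" and N: "{} \<notin> P" using partition_onD1[OF part] partition_onD3[OF part] by auto
  have cls: "c = {y\<in>X. coord y m = coord x m}" if "c \<in> P" "x \<in> c" for c x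
  proof
    show "c \<subseteq> {y\<in>X. coord y m = coord x m}"
    proof
      fix y assume "y \<in> c"
      then have "R x y" "y \<in> X" "x \<in> X" using that U unfolding R_def by auto
      then show "y \<in> {y\<in>X. coord y m = coord x m}" using h by auto
    qed
    show "{y\<in>X. coord y m = coord x m} \<subseteq> c"
    proof
      fix y assume y: "y \<in> {y\<in>X. coord y m = coord x m}"
      have "x \<in> X" using that U by auto
      then have "R x y" using h y by auto
      then obtain c' where "c' \<in> P" "x \<in> c'" "y \<in> c'" unfolding R_def by auto
      then show "y \<in> c" using same_part[of c c' x] that by auto
    qed
  qed
  show ?thesis
  proof
    show "P \<subseteq> Pm X m"
    proof
      fix c assume c: "c \<in> P"
      then obtain x where x: "x \<in> c" using N by (metis all_not_in_conv)
      then have "x \<in> X" using c U by auto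
      then show "c \<in> Pm X m" unfolding Pm_def using cls[OF c x] by auto
    qed
    show "Pm X m \<subseteq> P"
    proof
      fix d assume "d \<in> Pm X m"
      then obtain x where x: "x \<in> X" and d: "d = {y\<in>X. coord y m = coord x m}" unfolding Pm_def by auto
      obtain c where "c \<in> P" "x \<in> c" using x U by auto
      then show "d \<in> P" using cls d by auto
    qed
  qed
qed

lemma main_loc: "P = Pm X 1 \<or> P = Pm X 2 \<or> P = Pm X 3"
  using classify P_eq by auto

end

lemma Pm_partition: "partition_on X (Pm X m)"
proof (rule partition_onI)
  show "\<Union>(Pm X m) = X" unfolding Pm_def by auto
  show "{} \<notin> Pm X m" unfolding Pm_def by auto
  fix p q assume "p \<in> Pm X m" "q \<in> Pm X m" "p \<noteq> q"
  then show "disjnt p q" unfolding Pm_def disjnt_def by auto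
qed

lemma Pm_edge:
  assumes "e \<subseteq> X" "x \<in> e" "y \<in> e" "x \<noteq> y" "coord x m = coord y m" "u \<in> e" "w \<in> e" "coord u m \<noteq> coord w m"
  shows "(\<exists>c\<in>Pm X m. \<exists>x\<in>e. \<exists>y\<in>e. x \<noteq> y \<and> x \<in> c \<and> y \<in> c) \<and> (\<exists>c\<in>Pm X m. \<exists>x\<in>e. \<exists>y\<in>e. x \<in> c \<and> y \<notin> c)"
proof
  define c where "c = {z\<in>X. coord z m = coord x m}"
  have xX: "x \<in> X" "y \<in> X" "u \<in> X" "w \<in> X" using assms by auto
  have c1: "c \<in> Pm X m" unfolding Pm_def c_def using xX by blast
  have c2: "x \<in> c" "y \<in> c" unfolding c_def using xX assms(5) by auto
  show "\<exists>c\<in>Pm X m. \<exists>x\<in>e. \<exists>y\<in>e. x \<noteq> y \<and> x \<in> c \<and> y \<in> c"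
    using c1 c2 assms(2,3,4) by blast
  define d where "d = {z\<in>X. coord z m = coord u m}"
  have d1: "d \<in> Pm X m" unfolding Pm_def d_def using xX by blast
  have d2: "u \<in> d" "w \<notin> d" unfolding d_def using xX assms(8) by auto
  show "\<exists>c\<in>Pm X m. \<exists>x\<in>e. \<exists>y\<in>e. x \<in> c \<and> y \<notin> c"
    using d1 d2 assms(6,7) by blast
qed

lemma edge_generic:
  assumes "finite e" "card e = 3" "card (f ` e) = 2"
  shows "\<exists>x\<in>e. \<exists>y\<in>e. x \<noteq> y \<and> f x = f y" "\<exists>u\<in>e. \<exists>w\<in>e. f u \<noteq> f w"
proof -
  show "\<exists>x\<in>e. \<exists>y\<in>e. x \<noteq> y \<and> f x = f y"
  proof (rule ccontr)
    assume h: "\<not> (\<exists>x\<in>e. \<exists>y\<in>e. x \<noteq> y \<and> f x = f y)"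
    have "inj_on f e" unfolding inj_on_def using h by blast
    then have "card (f ` e) = card e" by (rule card_image)
    then show False using assms by simp
  qed
  show "\<exists>u\<in>e. \<exists>w\<in>e. f u \<noteq> f w"
  proof (rule ccontr)
    assume h: "\<not> (\<exists>u\<in>e. \<exists>w\<in>e. f u \<noteq> f w)"
    have "e \<noteq> {}" using assms by auto
    then obtain a where a: "a \<in> e" by blast
    have "f ` e \<subseteq> {f a}" using h a by blast
    then have "card (f ` e) \<le> card {f a}" by (intro card_mono) auto
    then show False using assms by simp
  qed
qed

lemma Pm_strict:
  fixes n1 n2 n3 :: nat
  assumes nn: "n1 > n2" "n2 > n3" "n3 \<ge> 2" and m: "m \<in> {1,2,3}"
  shows "strict_coloring (HX n1 n2 n3) (HB n1 n2 n3) (HB n1 n2 n3) (Pm (HX n1 n2 n3) m)"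
proof -
  have ex: "(1,1,1,0) \<in> HX n1 n2 n3" "(n3,n3,1,0) \<in> HX n1 n2 n3" "(n3,n3,n3,0) \<in> HX n1 n2 n3"
    using nn unfolding HX_def by force+
  have "(\<exists>c\<in>Pm (HX n1 n2 n3) m. \<exists>x\<in>e. \<exists>y\<in>e. x \<noteq> y \<and> x \<in> c \<and> y \<in> c) \<and>
        (\<exists>c\<in>Pm (HX n1 n2 n3) m. \<exists>x\<in>e. \<exists>y\<in>e. x \<in> c \<and> y \<notin> c)" if e: "e \<in> HB n1 n2 n3" for e
  proof (cases "e = {(1,1,1,0), (n3,n3,1,0), (n3,n3,n3,0)}")
    case True
    show ?thesis
    proof (cases "m = 3")
      case True
      show ?thesis
        by (rule Pm_edge[where x="(1,1,1,0)" and y="(n3,n3,1,0)" and u="(1,1,1,0)" and w="(n3,n3,n3,0)"])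
          (use ex nn \<open>m = 3\<close> \<open>e = _\<close> in auto)
    next
      case False
      then have "m = 1 \<or> m = 2" using m by auto
      then show ?thesis
        by (intro Pm_edge[where x="(n3,n3,1,0)" and y="(n3,n3,n3,0)" and u="(1,1,1,0)" and w="(n3,n3,n3,0)"])
          (use ex nn \<open>e = _\<close> in auto)
    qed
  next
    case False
    then have e3: "e \<subseteq> HX n1 n2 n3" "card e = 3" "card ((\<lambda>a. coord a m) ` e) = 2"
      using e m unfolding HB_def by auto
    then have fe: "finite e" by (metis card.infinite zero_neq_numeral)
    obtain x y where "x \<in> e" "y \<in> e" "x \<noteq> y" "coord x m = coord y m"
      using edge_generic(1)[OF fe e3(2,3)] by blast
    moreover obtain u w where "u \<in> e" "w \<in> e" "coord u m \<noteq> coord w m"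
      using edge_generic(2)[OF fe e3(2,3)] by blast
    ultimately show ?thesis using Pm_edge[OF e3(1)] by blast
  qed
  then show ?thesis unfolding strict_coloring_def using Pm_partition by blast
qed


lemma Pm_card: "card (Pm X m) = card ((\<lambda>a. coord a m) ` X)"
proof -
  have e: "Pm X m = (\<lambda>v. {y\<in>X. coord y m = v}) ` ((\<lambda>a. coord a m) ` X)"
    by (simp only: Pm_def image_image)
  have "inj_on (\<lambda>v. {y\<in>X. coord y m = v}) ((\<lambda>a. coord a m) ` X)"
  proof (rule inj_onI)
    fix v w assume "v \<in> (\<lambda>a. coord a m) ` X" "w \<in> (\<lambda>a. coord a m) ` X" and h: "{y\<in>X. coord y m = v} = {y\<in>X. coord y m = w}"
    then obtain x where x: "x \<in> X" "v = coord x m" by auto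
    then have "x \<in> {y\<in>X. coord y m = v}" by simp
    then have "x \<in> {y\<in>X. coord y m = w}" using h by simp
    then show "v = w" using x by simp
  qed
  then show ?thesis unfolding e by (rule card_image)
qed

lemma imgs:
  fixes n1 n2 n3 :: nat
  assumes nn: "n1 > n2" "n2 > n3" "n3 \<ge> 2"
  shows "(\<lambda>a. coord a 1) ` HX n1 n2 n3 = {1..n1}" "(\<lambda>a. coord a 2) ` HX n1 n2 n3 = {1..n2}" "(\<lambda>a. coord a 3) ` HX n1 n2 n3 = {1..n3}"
proof -
  have A: "(v,v,v,0) \<in> HX n1 n2 n3" if "1 \<le> v" "v \<le> n3" for v
    using that unfolding HX_def by auto
  have C: "(v,v,1,0) \<in> HX n1 n2 n3" if "n3 < v" "v < n2" for v
  proof -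
    have "v - n3 < n2 - n3" using that by simp
    then have "(n3 + (v - n3), n3 + (v - n3), 1, 0) \<in> HX n1 n2 n3" unfolding HX_def by auto
    then show ?thesis using that by simp
  qed
  have E: "(v,1,1,0) \<in> HX n1 n2 n3" if "n2 \<le> v" "v < n1" for v
  proof -
    have "v - n2 < n1 - n2" using that by simp
    then have "(n2 + (v - n2), 1, 1, 0) \<in> HX n1 n2 n3" unfolding HX_def by auto
    then show ?thesis using that by simp
  qed
  have G: "(n1,n2,n3,1) \<in> HX n1 n2 n3" unfolding HX_def by blast
  show "(\<lambda>a. coord a 1) ` HX n1 n2 n3 = {1..n1}"
  proof
    show "(\<lambda>a. coord a 1) ` HX n1 n2 n3 \<subseteq> {1..n1}" using nn by (auto simp: HX_def)
    show "{1..n1} \<subseteq> (\<lambda>a. coord a 1) ` HX n1 n2 n3"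
    proof
      fix v assume v: "v \<in> {1..n1}"
      consider "v \<le> n3" | "n3 < v" "v < n2" | "n2 \<le> v" "v < n1" | "v = n1" using v by force
      then show "v \<in> (\<lambda>a. coord a 1) ` HX n1 n2 n3"
      proof cases
        case 1 then show ?thesis using A[of v] v by (force intro: rev_image_eqI)
      next
        case 2 then show ?thesis using C[of v] by (force intro: rev_image_eqI)
      next
        case 3 then show ?thesis using E[of v] by (force intro: rev_image_eqI)
      next
        case 4 then show ?thesis using G by (force intro: rev_image_eqI)
      qed
    qed
  qed
  show "(\<lambda>a. coord a 2) ` HX n1 n2 n3 = {1..n2}"
  proof
    show "(\<lambda>a. coord a 2) ` HX n1 n2 n3 \<subseteq> {1..n2}" using nn by (auto simp: HX_def)
    show "{1..n2} \<subseteq> (\<lambda>a. coord a 2) ` HX n1 n2 n3"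
    proof
      fix v assume v: "v \<in> {1..n2}"
      consider "v \<le> n3" | "n3 < v" "v < n2" | "v = n2" using v by force
      then show "v \<in> (\<lambda>a. coord a 2) ` HX n1 n2 n3"
      proof cases
        case 1 then show ?thesis using A[of v] v by (force intro: rev_image_eqI)
      next
        case 2 then show ?thesis using C[of v] by (force intro: rev_image_eqI)
      next
        case 3 then show ?thesis using G by (force intro: rev_image_eqI)
      qed
    qed
  qed
  show "(\<lambda>a. coord a 3) ` HX n1 n2 n3 = {1..n3}"
  proof
    show "(\<lambda>a. coord a 3) ` HX n1 n2 n3 \<subseteq> {1..n3}" using nn by (auto simp: HX_def)
    show "{1..n3} \<subseteq> (\<lambda>a. coord a 3) ` HX n1 n2 n3"
    proof
      fix v assume v: "v \<in> {1..n3}"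
      then show "v \<in> (\<lambda>a. coord a 3) ` HX n1 n2 n3" using A[of v] by (force intro: rev_image_eqI)
    qed
  qed
qed

theorem lemma2p3:
  fixes n1 n2 n3 :: nat
  assumes "n1 > n2" and "n2 > n3" and "n3 \<ge> 2"
  shows "one_realization {n1, n2, n3} (HX n1 n2 n3) (HB n1 n2 n3) (HB n1 n2 n3)"
proof -
  note nn = assms
  let ?X = "HX n1 n2 n3" and ?B = "HB n1 n2 n3"
  have c1: "card (Pm ?X 1) = n1" using Pm_card imgs(1)[OF nn] by simp
  have c2: "card (Pm ?X 2) = n2" using Pm_card imgs(2)[OF nn] by simp
  have c3: "card (Pm ?X 3) = n3" using Pm_card imgs(3)[OF nn] by simp
  have s1: "strict_coloring ?X ?B ?B (Pm ?X 1)" using Pm_strict[OF nn] by simp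
  have s2: "strict_coloring ?X ?B ?B (Pm ?X 2)" using Pm_strict[OF nn] by simp
  have s3: "strict_coloring ?X ?B ?B (Pm ?X 3)" using Pm_strict[OF nn] by simp
  have cls: "P = Pm ?X 1 \<or> P = Pm ?X 2 \<or> P = Pm ?X 3" if "strict_coloring ?X ?B ?B P" for P
  proof -
    interpret col n1 n2 n3 P using nn that by unfold_locales auto
    show ?thesis using main_loc .
  qed
  have F: "feasible_set ?X ?B ?B = {n1, n2, n3}"
  proof
    show "feasible_set ?X ?B ?B \<subseteq> {n1, n2, n3}"
      unfolding feasible_set_def using cls c1 c2 c3 by blast
    show "{n1, n2, n3} \<subseteq> feasible_set ?X ?B ?B"
      unfolding feasible_set_def using s1 s2 s3 c1 c2 c3 by blast
  qed
  have M: "Max {n1, n2, n3} = n1" using nn by (simp add: max_def)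
  have S: "spectrum_entry ?X ?B ?B k \<in> {0, 1}" for k
  proof -
    let ?S = "{P. strict_coloring ?X ?B ?B P \<and> card P = k}"
    have sub: "?S \<subseteq> {Pm ?X 1, Pm ?X 2, Pm ?X 3}" using cls by blast
    then have fin: "finite ?S" by (rule finite_subset) simp
    have "\<forall>a\<in>?S. \<forall>b\<in>?S. a = b"
    proof (intro ballI)
      fix a b assume a: "a \<in> ?S" and b: "b \<in> ?S"
      then have "card a = card b" by simp
      moreover have "a \<in> {Pm ?X 1, Pm ?X 2, Pm ?X 3}" "b \<in> {Pm ?X 1, Pm ?X 2, Pm ?X 3}" using a b sub by blast+
      ultimately show "a = b" using c1 c2 c3 nn by auto
    qed
    then have "card ?S \<le> Suc 0" using card_le_Suc0_iff_eq[OF fin] by blast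
    then show ?thesis unfolding spectrum_entry_def by auto
  qed
  show ?thesis unfolding one_realization_def using F M S by simp
qed

end
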